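(* Let $B=\sum_{j=1}^{k-1}B_jz^{-j-1}dz\in O_B$ and suppose that for some $i\in\{1,\dots,k-1\}$ we have $B_{k-j}\in\mathfrak{h}_{k-j}$ for all $1\le j\le i$. Then $B_{k-j}=(dT)_{k-j}$ for all $1\le j\le i$.
   Context: Let $\mathfrak{g}=\mathfrak{gl}_n(\mathbb{C})$, $\mathfrak{t}$ a Cartan subalgebra, $k>1$, $T=\sum_{i=1}^{k-1}T_iz^{-i}$, $T_i\in\mathfrak{t}$, $T_{k-1}\ne0$, $dT=\sum_{i=1}^{k-1}(dT)_iz^{-i-1}dz$ with $(dT)_i=-iT_i$. $B_k=\{\sum_{i=0}^{k-1}b_iz^i:b_0=1\}\subset\mathrm{GL}_n(\mathbb{C}[z]/(z^k))$; $\mathfrak{b}_k^*=\{\sum_{i=1}^{k-1}X_iz^{-i-1}dz\}$ via $\mathrm{res}_{z=0}\mathrm{tr}$; coadjoint action $\mathrm{Ad}^*_bB$ = part of $bBb^{-1}$ in degrees $z^{-i-1}dz$, $1\le i\le k-1$; $O_B$ is the $B_k$-orbit of $dT$. $\mathfrak{h}_i=\bigcap_{j=i+1}^{k-1}\ker\mathrm{ad}_{T_j}$ for $0\le i\le k-2$ and $\mathfrak{h}_{k-1}=\mathfrak{g}$. *)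

theory Defs
  imports "HOL-Analysis.Analysis"
begin

text \<open>gl_n(C) is modelled as complex^'n^'n. A truncated series sum b_i z^i
  (and a dual element sum X_i z^(-i-1) dz) is a function nat => matrix;
  only the indices relevant for the given k are ever used.\<close>

type_synonym 'n mat = "complex^'n^'n"

definition dT :: "(nat \<Rightarrow> 'n::finite mat) \<Rightarrow> nat \<Rightarrow> 'n mat" where
  "dT T i = (\<chi> a b. - of_nat i * (T i $ a $ b))"

text \<open>All T_1..T_(k-1) lie in a common Cartan subalgebra of gl_n(C), i.e. they
  are simultaneously diagonalisable (every Cartan subalgebra of gl_n is a conjugate
  of the diagonal matrices).\<close>
definition in_common_cartan :: "nat \<Rightarrow> (nat \<Rightarrow> 'n::finite mat) \<Rightarrow> bool" where
  "in_common_cartan k T \<longleftrightarrow> (\<exists>P::'n mat. invertible P \<and>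
      (\<forall>i\<in>{1..k-1}. \<forall>a b. a \<noteq> b \<longrightarrow> (matrix_inv P ** T i ** P) $ a $ b = 0))"

text \<open>c is the inverse of b in GL_n(C[z]/(z^k)).\<close>
definition trunc_inverse :: "nat \<Rightarrow> (nat \<Rightarrow> 'n::finite mat) \<Rightarrow> (nat \<Rightarrow> 'n mat) \<Rightarrow> bool" where
  "trunc_inverse k b c \<longleftrightarrow>
     (\<forall>m<k. (\<Sum>j\<le>m. b j ** c (m - j)) = (if m = 0 then mat 1 else 0))"

text \<open>Coefficient of z^(-i-1) dz in b X b^(-1), where c = b^(-1).\<close>
definition coadj :: "nat \<Rightarrow> (nat \<Rightarrow> 'n::finite mat) \<Rightarrow> (nat \<Rightarrow> 'n mat) \<Rightarrow> (nat \<Rightarrow> 'n mat) \<Rightarrow> nat \<Rightarrow> 'n mat" where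
  "coadj k b c X i = (\<Sum>p\<le>k-1. \<Sum>q\<le>k-1. if i + p + q \<le> k - 1 then b p ** X (i + p + q) ** c q else 0)"

definition in_orbit :: "nat \<Rightarrow> (nat \<Rightarrow> 'n::finite mat) \<Rightarrow> (nat \<Rightarrow> 'n mat) \<Rightarrow> bool" where
  "in_orbit k T B \<longleftrightarrow> (\<exists>b c. b 0 = mat 1 \<and> trunc_inverse k b c \<and>
      (\<forall>i\<in>{1..k-1}. B i = coadj k b c (dT T) i))"

text \<open>h_i = intersection over j = i+1..k-1 of ker ad_(T_j); for i = k-1 the
  intersection is empty, giving all of gl_n, as in the paper.\<close>
definition hsub :: "nat \<Rightarrow> (nat \<Rightarrow> 'n::finite mat) \<Rightarrow> nat \<Rightarrow> 'n mat set" where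
  "hsub k T i = {X. \<forall>j. i < j \<and> j \<le> k - 1 \<longrightarrow> T j ** X - X ** T j = 0}"

end

theory Submission
  imports Defs
begin


lemma msum_left: "(\<Sum>i\<in>A. f i) ** (X::'a::comm_semiring_1^'n::finite^'m::finite) = (\<Sum>i\<in>A. f i ** X)"
  by (induction A rule: infinite_finite_induct) (auto simp: vec_eq_iff matrix_matrix_mult_def sum_distrib_right sum.distrib algebra_simps)

lemma msum_right: "(X::'a::comm_semiring_1^'n::finite^'m::finite) ** (\<Sum>i\<in>A. f i) = (\<Sum>i\<in>A. X ** f i)"
  by (induction A rule: infinite_finite_induct) (auto simp: vec_eq_iff matrix_matrix_mult_def sum_distrib_left sum.distrib algebra_simps)

lemma matrix_add_rdistrib': "((B + C) ** A) = (B ** A) + (C ** (A::'a::comm_semiring_1^'n::finite^'m::finite))"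
  by (simp add: vec_eq_iff matrix_matrix_mult_def sum.distrib algebra_simps)

lemma sum_rev_atMost: "(\<Sum>q\<le>s. g q (s - q)) = (\<Sum>j\<le>(s::nat). g (s - j) j)"
  by (rule sum.reindex_bij_witness[where i="\<lambda>q. s - q" and j="\<lambda>q. s - q"]) auto

lemma diag_right:
  assumes "\<forall>a b. a \<noteq> b \<longrightarrow> M $ a $ b = 0"
  shows "((X::'a::comm_semiring_1^'n::finite^'m::finite) ** M) $ a $ e = X $ a $ e * M $ e $ e"
proof -
  have "(X ** M) $ a $ e = (\<Sum>f\<in>UNIV. X $ a $ f * M $ f $ e)" by (simp add: matrix_matrix_mult_def)
  also have "\<dots> = (\<Sum>f\<in>UNIV. if f = e then X $ a $ e * M $ e $ e else 0)"
    by (rule sum.cong) (auto simp: assms)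
  finally show ?thesis by simp
qed

lemma diag_left:
  assumes "\<forall>a b. a \<noteq> b \<longrightarrow> M $ a $ b = 0"
  shows "(M ** (X::'a::comm_semiring_1^'n::finite^'n::finite)) $ a $ e = M $ a $ a * X $ a $ e"
proof -
  have "(M ** X) $ a $ e = (\<Sum>f\<in>UNIV. M $ a $ f * X $ f $ e)" by (simp add: matrix_matrix_mult_def)
  also have "\<dots> = (\<Sum>f\<in>UNIV. if f = a then M $ a $ a * X $ a $ e else 0)"
    by (rule sum.cong) (auto simp: assms)
  finally show ?thesis by simp
qed

lemma conj_scal: "Q ** (\<chi> a b. c * (X::'a::comm_semiring_1^'n::finite^'n) $ a $ b) ** P = (\<chi> a b. c * (Q ** X ** P) $ a $ b)"
  by (simp add: vec_eq_iff matrix_matrix_mult_def sum_distrib_left sum_distrib_right mult_ac)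



definition tr :: "nat \<Rightarrow> (nat \<Rightarrow> 'n::finite mat) \<Rightarrow> nat \<Rightarrow> 'n mat" where
  "tr K D l = (if l \<le> K then D l else 0)"

lemma regroup1: "coadj k b c D n = (\<Sum>q\<le>k-1. (\<Sum>p\<le>k-1. b p ** tr (k-1) D (n+q+p)) ** c q)"
proof -
  have "coadj k b c D n = (\<Sum>p\<le>k-1. \<Sum>q\<le>k-1. b p ** tr (k-1) D (n+q+p) ** c q)"
    unfolding coadj_def tr_def by (intro sum.cong refl) (auto simp: add_ac)
  also have "\<dots> = (\<Sum>q\<le>k-1. \<Sum>p\<le>k-1. b p ** tr (k-1) D (n+q+p) ** c q)"
    by (rule sum.swap)
  also have "\<dots> = (\<Sum>q\<le>k-1. (\<Sum>p\<le>k-1. b p ** tr (k-1) D (n+q+p)) ** c q)"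
    by (simp add: msum_left)
  finally show ?thesis .
qed

lemma c0: assumes "trunc_inverse k b c" "b 0 = mat 1" "0 < k" shows "c 0 = mat 1"
proof -
  have "(\<Sum>j\<le>0. b j ** c (0 - j)) = mat 1" using assms unfolding trunc_inverse_def by auto
  then show ?thesis using assms(2) by simp
qed

lemma inner_sum:
  fixes X :: "nat \<Rightarrow> 'a::ab_group_add"
  shows "(\<Sum>q\<le>s. if 1 \<le> q then X q else 0) = (\<Sum>q\<le>s. X q) - X 0"
proof -
  have "(\<Sum>q\<le>s. X q) = (\<Sum>q\<le>s. (if q = 0 then X 0 else 0) + (if 1 \<le> q then X q else 0))"
    by (intro sum.cong) (auto simp: not_le)
  also have "\<dots> = X 0 + (\<Sum>q\<le>s. if 1 \<le> q then X q else 0)"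
    by (simp add: sum.distrib)
  finally show ?thesis by simp
qed

lemma regroup2:
  assumes inv: "trunc_inverse k b c" and b0: "b 0 = mat 1" and n: "1 \<le> n" and k: "0 < k"
  shows "(\<Sum>q\<in>{1..k-1}. (\<Sum>r\<le>k-1. tr (k-1) D (n+q+r) ** b r) ** c q)
         = - (\<Sum>s\<in>{1..k-1}. tr (k-1) D (n+s) ** b s)"
proof -
  define K where "K = k - 1"
  define G where "G q r = (if 1 \<le> q then tr K D (n+q+r) ** b r ** c q else 0)" for q r
  have c0': "c 0 = mat 1" using c0[OF inv b0 k] .
  have "(\<Sum>q\<in>{1..K}. (\<Sum>r\<le>K. tr K D (n+q+r) ** b r) ** c q) = (\<Sum>q\<in>{q\<in>{..K}. 1 \<le> q}. \<Sum>r\<le>K. tr K D (n+q+r) ** b r ** c q)"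
    by (intro sum.cong) (auto simp: msum_left)
  also have "\<dots> = (\<Sum>q\<le>K. \<Sum>r\<le>K. G q r)"
    by (subst sum.inter_filter) (auto simp: G_def intro!: sum.cong)
  also have "\<dots> = (\<Sum>(q,r)\<in>{..K}\<times>{..K}. G q r)"
    by (simp add: sum.cartesian_product)
  also have "\<dots> = (\<Sum>(q,r)\<in>{(q,r). q+r \<le> K}. G q r)"
  proof (rule sum.mono_neutral_right)
    show "finite ({..K}\<times>{..K})" by simp
    show "{(q,r). q+r \<le> K} \<subseteq> {..K}\<times>{..K}" by auto
    show "\<forall>x\<in>{..K} \<times> {..K} - {(q, r). q + r \<le> K}. (case x of (q, r) \<Rightarrow> G q r) = 0"
      using n by (auto simp: G_def tr_def split: if_splits)
  qed
  also have "\<dots> = (\<Sum>s\<le>K. \<Sum>q\<le>s. G q (s - q))"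
    by (rule sum.triangle_reindex_eq)
  also have "\<dots> = (\<Sum>s\<le>K. if 1 \<le> s then - (tr K D (n+s) ** b s) else 0)"
  proof (intro sum.cong refl)
    fix s assume s: "s \<in> {..K}"
    have "(\<Sum>q\<le>s. G q (s - q)) = tr K D (n+s) ** (\<Sum>q\<le>s. if 1 \<le> q then b (s-q) ** c q else 0)"
      by (simp add: msum_right G_def matrix_mul_assoc if_distrib cong: if_cong)
    also have "(\<Sum>q\<le>s. if 1 \<le> q then b (s-q) ** c q else 0) = (\<Sum>q\<le>s. b (s-q) ** c q) - b s ** c 0"
      using inner_sum[of "\<lambda>q. b (s-q) ** c q" s] by simp
    also have "(\<Sum>q\<le>s. b (s-q) ** c q) = (\<Sum>j\<le>s. b j ** c (s-j))"
      using sum_rev_atMost[of "\<lambda>x y. b y ** c x" s] by simp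
    also have "\<dots> = (if s = 0 then mat 1 else 0)"
    proof -
      have "s < k" using s k K_def by auto
      then show ?thesis using inv unfolding trunc_inverse_def by blast
    qed
    finally have eq: "(\<Sum>q\<le>s. G q (s - q)) = tr K D (n+s) ** ((if s = 0 then mat 1 else 0) - b s ** c 0)" .
    show "(\<Sum>q\<le>s. G q (s - q)) = (if 1 \<le> s then - (tr K D (n+s) ** b s) else 0)"
    proof (cases "s = 0")
      case True
      then show ?thesis using eq b0 c0' by simp
    next
      case False
      then have "(\<Sum>q\<le>s. G q (s - q)) = tr K D (n+s) ** (- b s)" using eq c0' by simp
      also have "\<dots> = - (tr K D (n+s) ** b s)"
        by (simp add: vec_eq_iff matrix_matrix_mult_def sum_negf)
      finally show ?thesis using False by simp
    qed
  qed
  also have "\<dots> = (\<Sum>s\<in>{s\<in>{..K}. 1 \<le> s}. - (tr K D (n+s) ** b s))"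
    by (subst sum.inter_filter) auto
  also have "{s\<in>{..K}. 1 \<le> s} = {1..K}" by auto
  finally show ?thesis by (simp add: K_def sum_negf)
qed



lemma split0: "(\<Sum>q\<le>(K::nat). f q) = f 0 + (\<Sum>q\<in>{1..K}. (f q :: 'a::comm_monoid_add))"
proof -
  have "{..K} = insert 0 {1..K}" by auto
  then show ?thesis by simp
qed

lemma keyA:
  assumes b0: "b 0 = mat 1" and inv: "trunc_inverse k b c" and k: "0 < k"
    and orb: "\<forall>i\<in>{1..k-1}. B i = coadj k b c D i" and m: "1 \<le> m"
    and hyp: "\<forall>l. m < l \<and> l \<le> k-1 \<longrightarrow> B l = D l"
  shows "m \<le> n \<Longrightarrow> n \<le> k-1 \<Longrightarrow> (\<Sum>p\<le>k-1. b p ** tr (k-1) D (n+p)) = B n + (\<Sum>s\<in>{1..k-1}. tr (k-1) D (n+s) ** b s)"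
proof (induction "k-1-n" arbitrary: n rule: less_induct)
  case less
  define K where "K = k - 1"
  define Y where "Y x = (\<Sum>p\<le>K. b p ** tr K D (x+p))" for x
  have c0': "c 0 = mat 1" using c0[OF inv b0 k] .
  have n1: "1 \<le> n" using less m by auto
  have Yq: "Y (n+q) = (\<Sum>r\<le>K. tr K D (n+q+r) ** b r)" if q: "q \<in> {1..K}" for q
  proof (cases "n + q \<le> K")
    case True
    have IH: "Y (n+q) = B (n+q) + (\<Sum>s\<in>{1..K}. tr K D (n+q+s) ** b s)"
      using less.hyps[of "n+q"] True q less.prems unfolding Y_def K_def by (auto simp: add_ac)
    have "B (n+q) = D (n+q)" using hyp True q less.prems K_def by auto
    also have "\<dots> = tr K D (n+q+0) ** b 0" using True b0 by (simp add: tr_def)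
    finally show ?thesis using IH split0[of "\<lambda>r. tr K D (n+q+r) ** b r" K] by simp
  next
    case False
    then show ?thesis unfolding Y_def by (simp add: tr_def)
  qed
  have "B n = coadj k b c D n" using orb less.prems n1 by auto
  also have "\<dots> = (\<Sum>q\<le>K. Y (n+q) ** c q)" unfolding regroup1 Y_def K_def by simp
  also have "\<dots> = Y n + (\<Sum>q\<in>{1..K}. Y (n+q) ** c q)" using split0[of "\<lambda>q. Y (n+q) ** c q" K] c0' by simp
  also have "(\<Sum>q\<in>{1..K}. Y (n+q) ** c q) = (\<Sum>q\<in>{1..K}. (\<Sum>r\<le>K. tr K D (n+q+r) ** b r) ** c q)"
    using Yq by simp
  also have "\<dots> = - (\<Sum>s\<in>{1..K}. tr K D (n+s) ** b s)"
    using regroup2[OF inv b0 n1 k] unfolding K_def by simp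
  finally have "B n = Y n - (\<Sum>s\<in>{1..K}. tr K D (n+s) ** b s)" by simp
  then show ?case unfolding Y_def K_def by (simp add: algebra_simps)
qed



theorem lemma3p12:
  fixes T B :: "nat \<Rightarrow> complex^'n::finite^'n" and k i :: nat
  assumes "k > 1"
    and "in_common_cartan k T"
    and "T (k - 1) \<noteq> 0"
    and "in_orbit k T B"
    and "1 \<le> i" and "i \<le> k - 1"
    and "\<forall>j\<in>{1..i}. B (k - j) \<in> hsub k T (k - j)"
  shows "\<forall>j\<in>{1..i}. B (k - j) = dT T (k - j)"
proof -
  define K where "K = k - 1"
  define D where "D = dT T"
  obtain b c where b0: "b 0 = mat 1" and inv: "trunc_inverse k b c"
    and orb: "\<forall>i\<in>{1..k-1}. B i = coadj k b c D i"
    using assms(4) unfolding in_orbit_def D_def by (elim exE conjE) simp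
  obtain P :: "'n mat" where P: "invertible P"
    and diagT: "\<forall>l\<in>{1..k-1}. \<forall>a b. a \<noteq> b \<longrightarrow> (matrix_inv P ** T l ** P) $ a $ b = 0"
    using assms(2) unfolding in_common_cartan_def by (elim exE conjE) simp
  define Q where "Q = matrix_inv P"
  have QP: "Q ** P = mat 1" and PQ: "P ** Q = mat 1"
  proof -
    have ex: "\<exists>A'. P ** A' = mat 1 \<and> A' ** P = mat 1" using P unfolding invertible_def by blast
    have "P ** Q = mat 1 \<and> Q ** P = mat 1" unfolding Q_def matrix_inv_def by (rule someI_ex[OF ex])
    then show "Q ** P = mat 1" "P ** Q = mat 1" by auto
  qed
  define cj where "cj X = Q ** X ** P" for X :: "'n mat"
  have cj_mul: "cj (X ** Y) = cj X ** cj Y" for X Y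
  proof -
    have "cj X ** cj Y = Q ** X ** (P ** Q) ** Y ** P" unfolding cj_def by (simp add: matrix_mul_assoc)
    then show ?thesis unfolding cj_def PQ by (simp add: matrix_mul_assoc)
  qed
  have cj_add: "cj (X + Y) = cj X + cj Y" for X Y
    unfolding cj_def by (simp add: matrix_add_ldistrib matrix_add_rdistrib')
  have cj_sum: "cj (\<Sum>x\<in>A. f x) = (\<Sum>x\<in>A. cj (f x))" for A and f :: "nat \<Rightarrow> 'n mat"
    unfolding cj_def by (simp add: msum_left msum_right)
  have cj_inj: "X = Y" if "cj X = cj Y" for X Y
  proof -
    have "X = (P ** Q) ** X ** (P ** Q)" unfolding PQ by simp
    also have "\<dots> = P ** cj X ** Q" unfolding cj_def by (simp add: matrix_mul_assoc)
    also have "\<dots> = P ** cj Y ** Q" using that by simp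
    also have "\<dots> = (P ** Q) ** Y ** (P ** Q)" unfolding cj_def by (simp add: matrix_mul_assoc)
    finally show ?thesis unfolding PQ by simp
  qed
  have cj1: "cj (mat 1) = mat 1" unfolding cj_def using QP by simp
  define tt where "tt l x = cj (T l) $ x $ x" for l x
  define dd where "dd l x = cj (tr K D l) $ x $ x" for l x
  have diagD: "\<forall>a e. a \<noteq> e \<longrightarrow> cj (tr K D l) $ a $ e = 0" if "1 \<le> l" for l
  proof (cases "l \<le> K")
    case True
    have "cj (tr K D l) = (\<chi> a b. (- of_nat l) * cj (T l) $ a $ b)"
      using True conj_scal[of Q "- complex_of_nat l" "T l" P] unfolding tr_def D_def dT_def cj_def by simp
    then show ?thesis using diagT True that unfolding cj_def Q_def K_def by simp
  next
    case False
    then show ?thesis unfolding tr_def cj_def by simp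
  qed
  have dd_eq: "dd l x = (if l \<le> K then - of_nat l * tt l x else 0)" for l x
  proof (cases "l \<le> K")
    case True
    have "cj (tr K D l) = (\<chi> a b. (- of_nat l) * cj (T l) $ a $ b)"
      using True conj_scal[of Q "- complex_of_nat l" "T l" P] unfolding tr_def D_def dT_def cj_def by simp
    then show ?thesis using True unfolding dd_def tt_def by simp
  next
    case False
    then show ?thesis unfolding dd_def tr_def cj_def by simp
  qed
  have main: "1 \<le> j \<longrightarrow> j \<le> i \<longrightarrow> B (k - j) = D (k - j)" for j
  proof (induction j rule: less_induct)
    case (less j)
    show ?case
    proof (intro impI)
      assume j1: "1 \<le> j" and ji: "j \<le> i"
      define m where "m = k - j"
      have m1: "1 \<le> m" and mK: "m \<le> K" using j1 ji assms(6) assms(1) unfolding m_def K_def by auto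
      have hyp: "\<forall>l. m < l \<and> l \<le> k-1 \<longrightarrow> B l = D l"
      proof (intro allI impI)
        fix l assume l: "m < l \<and> l \<le> k - 1"
        then have "B (k - (k - l)) = D (k - (k - l))"
          using less.IH[of "k - l"] j1 ji unfolding m_def by auto
        moreover have "k - (k - l) = l" using l by auto
        ultimately show "B l = D l" by simp
      qed
      have E: "(\<Sum>p\<le>K. b p ** tr K D (m+p)) = B m + (\<Sum>s\<in>{1..K}. tr K D (m+s) ** b s)"
        using keyA[OF b0 inv _ orb m1 hyp, of m] assms(1) mK unfolding K_def by simp
      have E': "(\<Sum>p\<le>K. cj (b p) ** cj (tr K D (m+p))) = cj (B m) + (\<Sum>s\<in>{1..K}. cj (tr K D (m+s)) ** cj (b s))"
        using arg_cong[OF E, of cj] by (simp add: cj_sum cj_add cj_mul)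
      have comm: "tt l a * cj (B m) $ a $ e = cj (B m) $ a $ e * tt l e" if l: "m < l" "l \<le> K" for l a e
      proof -
        have "B m \<in> hsub k T m" using assms(7) j1 ji unfolding m_def by auto
        then have "T l ** B m = B m ** T l" using l unfolding hsub_def K_def by auto
        then have "cj (T l) ** cj (B m) = cj (B m) ** cj (T l)" by (metis cj_mul)
        then have "(cj (T l) ** cj (B m)) $ a $ e = (cj (B m) ** cj (T l)) $ a $ e" by simp
        moreover have "\<forall>a e. a \<noteq> e \<longrightarrow> cj (T l) $ a $ e = 0"
          using diagT l m1 unfolding cj_def Q_def K_def by auto
        ultimately show ?thesis unfolding tt_def by (simp add: diag_left diag_right)
      qed
      have "cj (B m) = cj (D m)"
      proof -
        have "cj (B m) $ a $ e = cj (D m) $ a $ e" for a e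
        proof -
          have Dm: "cj (D m) = cj (tr K D m)" using mK by (simp add: tr_def)
          have Dme: "cj (D m) $ a $ e = (if a = e then dd m e else 0)"
            using Dm diagD[OF m1] unfolding dd_def by auto
          have Ee: "(\<Sum>p\<le>K. cj (b p) $ a $ e * dd (m+p) e) = cj (B m) $ a $ e + (\<Sum>s\<in>{1..K}. dd (m+s) a * cj (b s) $ a $ e)"
          proof -
            have "(\<Sum>p\<le>K. cj (b p) ** cj (tr K D (m+p))) $ a $ e = (cj (B m) + (\<Sum>s\<in>{1..K}. cj (tr K D (m+s)) ** cj (b s))) $ a $ e"
              using E' by simp
            moreover have "\<And>p. (cj (b p) ** cj (tr K D (m+p))) $ a $ e = cj (b p) $ a $ e * dd (m+p) e"
              unfolding dd_def using diagD m1 by (intro diag_right) auto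
            moreover have "\<And>s. (cj (tr K D (m+s)) ** cj (b s)) $ a $ e = dd (m+s) a * cj (b s) $ a $ e"
              unfolding dd_def using diagD m1 by (intro diag_left) auto
            ultimately show ?thesis by (simp add: sum_component)
          qed
          have b0e: "cj (b 0) $ a $ e = (if a = e then 1 else 0)" using b0 cj1 by (simp add: mat_def)
          have S0: "(\<Sum>p\<le>K. cj (b p) $ a $ e * dd (m+p) e) = (if a = e then 1 else 0) * dd m e + (\<Sum>s\<in>{1..K}. cj (b s) $ a $ e * dd (m+s) e)"
            using split0[of "\<lambda>p. cj (b p) $ a $ e * dd (m+p) e" K] b0e by simp
          from Ee have Ee2: "(if a = e then 1 else 0) * dd m e + (\<Sum>s\<in>{1..K}. cj (b s) $ a $ e * dd (m+s) e)
               = cj (B m) $ a $ e + (\<Sum>s\<in>{1..K}. dd (m+s) a * cj (b s) $ a $ e)"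
            unfolding S0 .
          show ?thesis
          proof (cases "\<forall>l. m < l \<and> l \<le> K \<longrightarrow> tt l a = tt l e")
            case True
            have "\<And>s. s \<in> {1..K} \<Longrightarrow> dd (m+s) a = dd (m+s) e"
              using True unfolding dd_eq by auto
            then have "(\<Sum>s\<in>{1..K}. dd (m+s) a * cj (b s) $ a $ e) = (\<Sum>s\<in>{1..K}. cj (b s) $ a $ e * dd (m+s) e)"
              by (intro sum.cong) (auto simp: mult.commute)
            then have "(if a = e then 1 else 0) * dd m e = cj (B m) $ a $ e" using Ee2 by simp
            then show ?thesis using Dme by (cases "a = e") auto
          next
            case False
            then obtain l where l: "m < l" "l \<le> K" "tt l a \<noteq> tt l e" by blast
            then have "a \<noteq> e" by auto
            moreover have "cj (B m) $ a $ e = 0"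
              using comm[OF l(1,2), of a e] l(3) by (metis mult.commute mult_cancel_left)
            ultimately show ?thesis using Dme by simp
          qed
        qed
        then show ?thesis by (simp add: vec_eq_iff)
      qed
      then show "B (k - j) = D (k - j)" using cj_inj unfolding m_def by blast
    qed
  qed
  show ?thesis using main unfolding D_def by auto
qed

end
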